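(* Let $n\ge2$, $d\ge1$, $r\ge3$ with $n\ge d$ and $dr\equiv0\pmod n$. For every vertex $(a,x)$ of $Q_n(d,r)$, the distance in $Q_n(d,r)$ between $(0_n,0)$ and $(a,x)$ equals $\|a\|+l(a,x)$.
   Context: $\mathbb{Z}_2^n=\{0,1\}^n$ with coordinatewise addition mod 2; $e_i$ is the $i$-th standard basis vector, subscripts read modulo $n$; $\|a\|$ is the Hamming weight of $a$. The recursive cube of rings $Q_n(d,r)$ is the simple graph on $\mathbb{Z}_2^n\times\mathbb{Z}_r$ in which $(a,x)$ is adjacent to $(a+e_{i+dx},x)$ for $1\le i\le d$ and to $(a,x\pm1)$. For $x\in\mathbb{Z}_r$, $D(x)=\{i+dx\bmod n:1\le i\le d\}\subseteq\{1,\dots,n\}$. Elements of $\mathbb{Z}_r$ are represented in $\{0,\dots,r-1\}$. With $s=\|a\|$, an $(a,x)$-sequence is a tuple $\hat x=(x_0,x_1,\dots,x_s,x_{s+1})$ of elements of $\mathbb{Z}_r$ with $x_0=0$, $x_{s+1}=x$, such that the support $\{i: a_i=1\}$ can be enumerated as $i_1,\dots,i_s$ with $i_t\in D(x_t)$ for every $1\le t\le s$. Its length is $l(\hat x)=\sum_{t=1}^{s+1}\min\{|x_t-x_{t-1}|,\,r-|x_t-x_{t-1}|\}$, and $l(a,x)=\min_{\hat x} l(\hat x)$ over all $(a,x)$-sequences. *)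

theory Defs
  imports Main
begin

text \<open>Z_2^n is represented by subsets of {1..n} (a vector a is identified with its
support {i. a_i = 1}); addition of e_i is symmetric difference with {i}, and the
Hamming weight is the cardinality.\<close>

definition sdiff1 :: "nat set \<Rightarrow> nat \<Rightarrow> nat set" where
  "sdiff1 a i = (if i \<in> a then a - {i} else insert i a)"

text \<open>Index i + d x read modulo n, represented in {1..n}.\<close>
definition idx :: "nat \<Rightarrow> nat \<Rightarrow> nat \<Rightarrow> nat \<Rightarrow> nat" where
  "idx n d i x = ((i + d * x + n - 1) mod n) + 1"

definition Dset :: "nat \<Rightarrow> nat \<Rightarrow> nat \<Rightarrow> nat set" where
  "Dset n d x = {idx n d i x | i. 1 \<le> i \<and> i \<le> d}"

definition QV :: "nat \<Rightarrow> nat \<Rightarrow> (nat set \<times> nat) set" where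
  "QV n r = {(a, x). a \<subseteq> {1..n} \<and> x < r}"

definition Qadj :: "nat \<Rightarrow> nat \<Rightarrow> nat \<Rightarrow> nat set \<times> nat \<Rightarrow> nat set \<times> nat \<Rightarrow> bool" where
  "Qadj n d r u v \<longleftrightarrow> u \<in> QV n r \<and> v \<in> QV n r \<and>
     ((snd v = snd u \<and> (\<exists>i. 1 \<le> i \<and> i \<le> d \<and> fst v = sdiff1 (fst u) (idx n d i (snd u))))
      \<or> (fst v = fst u \<and> (snd v = (snd u + 1) mod r \<or> snd u = (snd v + 1) mod r)))"

definition Qwalk :: "nat \<Rightarrow> nat \<Rightarrow> nat \<Rightarrow> (nat set \<times> nat) list \<Rightarrow> bool" where
  "Qwalk n d r p \<longleftrightarrow> p \<noteq> [] \<and> set p \<subseteq> QV n r \<and>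
     (\<forall>j. Suc j < length p \<longrightarrow> Qadj n d r (p ! j) (p ! Suc j))"

definition Qdist :: "nat \<Rightarrow> nat \<Rightarrow> nat \<Rightarrow> nat set \<times> nat \<Rightarrow> nat set \<times> nat \<Rightarrow> nat" where
  "Qdist n d r u v = (LEAST k. \<exists>p. Qwalk n d r p \<and> hd p = u \<and> last p = v \<and> length p = k + 1)"

definition cdist :: "nat \<Rightarrow> nat \<Rightarrow> nat \<Rightarrow> nat" where
  "cdist r x y = (let t = (if x \<le> y then y - x else x - y) in min t (r - t))"

definition is_seq :: "nat \<Rightarrow> nat \<Rightarrow> nat \<Rightarrow> nat set \<Rightarrow> nat \<Rightarrow> (nat \<Rightarrow> nat) \<Rightarrow> bool" where
  "is_seq n d r a x xs \<longleftrightarrow>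
     (let s = card a in
       xs 0 = 0 \<and> xs (s + 1) = x \<and> (\<forall>t \<le> s + 1. xs t < r) \<and>
       (\<exists>f. bij_betw f {1..s} a \<and> (\<forall>t\<in>{1..s}. f t \<in> Dset n d (xs t))))"

definition seq_len :: "nat \<Rightarrow> nat set \<Rightarrow> (nat \<Rightarrow> nat) \<Rightarrow> nat" where
  "seq_len r a xs = (\<Sum>t = 1..card a + 1. cdist r (xs t) (xs (t - 1)))"

definition lmin :: "nat \<Rightarrow> nat \<Rightarrow> nat \<Rightarrow> nat set \<Rightarrow> nat \<Rightarrow> nat" where
  "lmin n d r a x = (LEAST k. \<exists>xs. is_seq n d r a x xs \<and> seq_len r a xs = k)"

end

theory Submission
  imports Defs
begin


inductive reach :: "nat \<Rightarrow> nat \<Rightarrow> nat \<Rightarrow> nat set \<times> nat \<Rightarrow> nat \<Rightarrow> nat set \<times> nat \<Rightarrow> bool"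
  for n d r u where
  r0: "u \<in> QV n r \<Longrightarrow> reach n d r u 0 u"
| rS: "reach n d r u k v \<Longrightarrow> Qadj n d r v w \<Longrightarrow> reach n d r u (Suc k) w"

lemma reach_QV: "reach n d r u k v \<Longrightarrow> v \<in> QV n r"
  by (induction rule: reach.induct) (auto simp: Qadj_def)

lemma walk_to_reach:
  "Qwalk n d r p \<Longrightarrow> hd p = u \<Longrightarrow> last p = v \<Longrightarrow> length p = Suc k \<Longrightarrow> reach n d r u k v"
proof (induction k arbitrary: p v)
  case 0
  then obtain w where "p = [w]" by (cases p) auto
  with 0 show ?case by (auto simp: Qwalk_def intro: reach.r0)
next
  case (Suc k)
  define q where "q = butlast p"
  have lp: "length q = Suc k" using Suc.prems(4) by (simp add: q_def)
  have pne: "p \<noteq> []" using Suc.prems(1) by (simp add: Qwalk_def)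
  have pq: "p = q @ [last p]" using pne by (simp add: q_def)
  have qw: "Qwalk n d r q"
    unfolding Qwalk_def
  proof (intro conjI allI impI)
    show "q \<noteq> []" using lp by auto
    show "set q \<subseteq> QV n r" using Suc.prems(1) pq unfolding Qwalk_def
      by (metis le_sup_iff set_append)
    fix j assume j: "Suc j < length q"
    have pw: "\<forall>j. Suc j < length p \<longrightarrow> Qadj n d r (p ! j) (p ! Suc j)"
      using Suc.prems(1) unfolding Qwalk_def by blast
    have "Suc j < length p" using j lp Suc.prems(4) by simp
    then have "Qadj n d r (p ! j) (p ! Suc j)" using pw by blast
    then show "Qadj n d r (q ! j) (q ! Suc j)" using j
      by (simp add: q_def nth_butlast)
  qed
  have hq: "hd q = u" using Suc.prems(2) pq lp by (metis hd_append2 list.size(3) nat.simps(3))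
  have lq: "last q = p ! k"
  proof -
    have "last q = q ! k" using lp by (metis diff_Suc_1 last_conv_nth list.size(3) nat.simps(3))
    then show ?thesis using lp by (simp add: q_def nth_butlast)
  qed
  have "reach n d r u k (p ! k)" using Suc.IH[OF qw hq lq lp] .
  moreover have "Qadj n d r (p ! k) (p ! Suc k)"
  proof -
    have pw: "\<forall>j. Suc j < length p \<longrightarrow> Qadj n d r (p ! j) (p ! Suc j)"
      using Suc.prems(1) unfolding Qwalk_def by blast
    then show ?thesis using Suc.prems(4) by simp
  qed
  moreover have "p ! Suc k = v" using Suc.prems(3,4) pne by (simp add: last_conv_nth)
  ultimately show ?case using reach.rS by metis
qed

lemma reach_to_walk:
  "reach n d r u k v \<Longrightarrow> \<exists>p. Qwalk n d r p \<and> hd p = u \<and> last p = v \<and> length p = Suc k"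
proof (induction rule: reach.induct)
  case r0
  then show ?case by (intro exI[of _ "[u]"]) (auto simp: Qwalk_def)
next
  case (rS k v w)
  then obtain p where p: "Qwalk n d r p" "hd p = u" "last p = v" "length p = Suc k" by blast
  have wq: "w \<in> QV n r" using rS(2) by (simp add: Qadj_def)
  have "Qwalk n d r (p @ [w])"
    unfolding Qwalk_def
  proof (intro conjI allI impI)
    show "p @ [w] \<noteq> []" by simp
    show "set (p @ [w]) \<subseteq> QV n r" using p(1) wq by (auto simp: Qwalk_def)
    fix j assume j: "Suc j < length (p @ [w])"
    show "Qadj n d r ((p @ [w]) ! j) ((p @ [w]) ! Suc j)"
    proof (cases "Suc j < length p")
      case True
      have pw: "\<forall>j. Suc j < length p \<longrightarrow> Qadj n d r (p ! j) (p ! Suc j)"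
        using p(1) unfolding Qwalk_def by blast
      then show ?thesis using True by (simp add: nth_append)
    next
      case False
      then have "Suc j = length p" using j by simp
      have pne: "p \<noteq> []" using p(4) by auto
      have jj: "j = length p - 1" using \<open>Suc j = length p\<close> by simp
      have "(p @ [w]) ! j = p ! (length p - 1)" using jj pne
        by (simp add: nth_append)
      also have "\<dots> = v" using p(3) pne by (simp add: last_conv_nth)
      finally have "(p @ [w]) ! j = v" .
      moreover have "(p @ [w]) ! Suc j = w" using \<open>Suc j = length p\<close> by (simp add: nth_append)
      ultimately show ?thesis using rS(2) by simp
    qed
  qed
  moreover have "hd (p @ [w]) = u" using p(2,4) by (cases p) auto
  ultimately show ?case using p by (intro exI[of _ "p @ [w]"]) auto
qed

lemma Qdist_reach: "Qdist n d r u v = (LEAST k. reach n d r u k v)"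
proof -
  have "(\<exists>p. Qwalk n d r p \<and> hd p = u \<and> last p = v \<and> length p = k + 1) = reach n d r u k v" for k
  proof
    assume "\<exists>p. Qwalk n d r p \<and> hd p = u \<and> last p = v \<and> length p = k + 1"
    then obtain p where "Qwalk n d r p" "hd p = u" "last p = v" "length p = Suc k" by auto
    then show "reach n d r u k v" by (rule walk_to_reach)
  next
    assume "reach n d r u k v"
    then show "\<exists>p. Qwalk n d r p \<and> hd p = u \<and> last p = v \<and> length p = k + 1"
      using reach_to_walk[of n d r u k v] by simp
  qed
  then show ?thesis by (simp add: Qdist_def)
qed

lemma core: fixes a b c r :: nat
  assumes "a \<le> r" "b \<le> r" "c \<le> r" "a = b + c \<or> b = a + c \<or> c = a + b"
  shows "min a (r - a) \<le> min b (r - b) + min c (r - c)"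
  unfolding min_add_distrib_left min_add_distrib_right min.bounded_iff min_le_iff_disj
  using assms by arith

lemma cdist_tri: "x < r \<Longrightarrow> y < r \<Longrightarrow> z < r \<Longrightarrow> cdist r x z \<le> cdist r x y + cdist r y z"
  unfolding cdist_def Let_def
  by (rule core) auto

lemma cdist_same[simp]: "cdist r x x = 0"
  unfolding cdist_def by simp

lemma cdist_ring1: "y < r \<Longrightarrow> r \<ge> 3 \<Longrightarrow> (z = (y + 1) mod r \<or> y = (z + 1) mod r) \<Longrightarrow> z < r \<Longrightarrow> cdist r z y \<le> 1"
proof -
  assume a: "y < r" "r \<ge> 3" "(z = (y + 1) mod r \<or> y = (z + 1) mod r)" "z < r"
  have m: "\<And>u. u < r \<Longrightarrow> (u + 1) mod r = (if u + 1 < r then u + 1 else 0)"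
  proof -
    fix u assume "u < r"
    then have "u + 1 < r \<or> u + 1 = r" by linarith
    then show "(u + 1) mod r = (if u + 1 < r then u + 1 else 0)" by auto
  qed
  have "z = y + 1 \<or> (y = r - 1 \<and> z = 0) \<or> y = z + 1 \<or> (z = r - 1 \<and> y = 0)"
  proof (cases "z = (y + 1) mod r")
    case True
    show ?thesis
    proof (cases "y + 1 < r")
      case True then show ?thesis using \<open>z = (y + 1) mod r\<close> by simp
    next
      case False then have "y = r - 1" using a(1) by linarith
      moreover have "z = 0" using False \<open>z = (y + 1) mod r\<close> m[of y] a(1) by simp
      ultimately show ?thesis by simp
    qed
  next
    case False
    then have yz: "y = (z + 1) mod r" using a(3) by blast
    show ?thesis
    proof (cases "z + 1 < r")
      case True then show ?thesis using yz by simp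
    next
      case False then have "z = r - 1" using a(4) by linarith
      moreover have "y = 0" using False yz m[of z] a(4) by simp
      ultimately show ?thesis by simp
    qed
  qed
  then show ?thesis
  proof (elim disjE conjE)
    assume "z = y + 1" then show ?thesis by (simp add: cdist_def)
  next
    assume "y = r - 1" "z = 0" then show ?thesis using a by (simp add: cdist_def)
  next
    assume "y = z + 1" then show ?thesis by (simp add: cdist_def)
  next
    assume "z = r - 1" "y = 0" then show ?thesis using a by (simp add: cdist_def)
  qed
qed




lemma seq_len_split:
  "seq_len r a xs = (\<Sum>t=1..card a. cdist r (xs t) (xs (t-1))) + cdist r (xs (card a + 1)) (xs (card a))"
  by (simp add: seq_len_def)

lemma sum_remove:
  fixes F :: "nat \<Rightarrow> nat"
  assumes k: "1 \<le> k"
  shows "(\<forall>t \<le> Suc (k+j). F t < r) \<Longrightarrow> (\<Sum>t=1..k+j. cdist r (F (if t < k then t else Suc t)) (F (if t - 1 < k then t - 1 else Suc (t - 1))))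
         \<le> (\<Sum>t=1..Suc (k+j). cdist r (F t) (F (t-1)))"
proof (induction j)
  case 0
  obtain k' where kk: "k = Suc k'" using k by (cases k) auto
  have e: "(\<Sum>t=1..k'. cdist r (F (if t < k then t else Suc t)) (F (if t - 1 < k then t - 1 else Suc (t - 1))))
        = (\<Sum>t=1..k'. cdist r (F t) (F (t-1)))"
    by (rule sum.cong) (auto simp: kk)
  have tri: "cdist r (F (Suc k)) (F k') \<le> cdist r (F (Suc k)) (F k) + cdist r (F k) (F k')"
  proof -
    have "F (Suc k) < r" "F k < r" "F k' < r" using "0.prems" kk by auto
    then show ?thesis using cdist_tri by blast
  qed
  show ?case using e tri by (simp add: kk)
next
  case (Suc j)
  have a: "cdist r (F (if Suc (k+j) < k then Suc (k+j) else Suc (Suc (k+j))))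
      (F (if Suc (k+j) - 1 < k then Suc (k+j) - 1 else Suc (Suc (k+j) - 1)))
      = cdist r (F (Suc (Suc (k+j)))) (F (Suc (Suc (k+j)) - 1))" by simp
  have "(\<forall>t \<le> Suc (k+j). F t < r)" using Suc.prems by simp
  then show ?case using Suc.IH a by simp
qed


lemma ring_fwd:
  assumes "reach n d r u k (b, y)" "r > 0"
  shows "reach n d r u (k + j) (b, (y + j) mod r)"
proof (induction j)
  case 0
  have "y < r" using reach_QV[OF assms(1)] by (simp add: QV_def)
  then show ?case using assms(1) by simp
next
  case (Suc j)
  have bq: "b \<subseteq> {1..n}" using reach_QV[OF assms(1)] by (simp add: QV_def)
  have "Qadj n d r (b, (y + j) mod r) (b, (y + Suc j) mod r)"
    unfolding Qadj_def QV_def using bq assms(2) by (simp add: mod_Suc_eq)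
  then show ?case using Suc.IH reach.rS by fastforce
qed

lemma ring_bwd:
  assumes "reach n d r u k (b, y)" "r > 0"
  shows "w < r \<Longrightarrow> (w + j) mod r = y \<Longrightarrow> reach n d r u (k + j) (b, w)"
proof (induction j arbitrary: w)
  case 0
  then show ?case using assms(1) by simp
next
  case (Suc j)
  have bq: "b \<subseteq> {1..n}" using reach_QV[OF assms(1)] by (simp add: QV_def)
  define w' where "w' = (w + 1) mod r"
  have w'r: "w' < r" using assms(2) by (simp add: w'_def)
  have "(w' + j) mod r = y" using Suc.prems(2) unfolding w'_def
    by (metis add.commute add_Suc_right mod_add_left_eq plus_1_eq_Suc)
  then have "reach n d r u (k + j) (b, w')" using Suc.IH w'r by blast
  moreover have "Qadj n d r (b, w') (b, w)"
    unfolding Qadj_def QV_def using bq Suc.prems(1) w'r by (simp add: w'_def)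
  ultimately show ?case using reach.rS by fastforce
qed

lemma ring_move:
  assumes "reach n d r u k (b, y)" "r > 0" "z < r"
  shows "reach n d r u (k + cdist r z y) (b, z)"
proof -
  have yr: "y < r" using reach_QV[OF assms(1)] by (simp add: QV_def)
  show ?thesis
  proof (cases "y \<le> z")
    case True
    then have c: "cdist r z y = min (z - y) (r - (z - y))"
      by (auto simp: cdist_def Let_def)
    show ?thesis
    proof (cases "z - y \<le> r - (z - y)")
      case True
      have "reach n d r u (k + (z - y)) (b, (y + (z - y)) mod r)"
        using ring_fwd[OF assms(1,2)] .
      then show ?thesis using c True \<open>y \<le> z\<close> assms(3) by simp
    next
      case False
      have "(z + (r - (z - y))) mod r = y" using \<open>y \<le> z\<close> assms(3) yr
        by (simp add: mod_if)
      then have "reach n d r u (k + (r - (z - y))) (b, z)"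
        using ring_bwd[OF assms(1,2) assms(3)] by blast
      then show ?thesis using c False by simp
    qed
  next
    case False
    then have c: "cdist r z y = min (y - z) (r - (y - z))"
      by (auto simp: cdist_def Let_def)
    show ?thesis
    proof (cases "y - z \<le> r - (y - z)")
      case True
      have "(z + (y - z)) mod r = y" using False yr by simp
      then have "reach n d r u (k + (y - z)) (b, z)"
        using ring_bwd[OF assms(1,2) assms(3)] by blast
      then show ?thesis using c True by simp
    next
      case F2: False
      have "(y + (r - (y - z))) mod r = z" using False assms(3) yr
        by (simp add: mod_if)
      moreover have "reach n d r u (k + (r - (y - z))) (b, (y + (r - (y - z))) mod r)"
        using ring_fwd[OF assms(1,2)] .
      ultimately show ?thesis using c F2 by simp
    qed
  qed
qed




lemma Dset_I: "1 \<le> j \<Longrightarrow> j \<le> d \<Longrightarrow> idx n d j y \<in> Dset n d y"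
  unfolding Dset_def by blast

lemma Dset_E: "i \<in> Dset n d y \<Longrightarrow> \<exists>j. 1 \<le> j \<and> j \<le> d \<and> i = idx n d j y"
  unfolding Dset_def by blast

lemma upper:
  assumes sq: "is_seq n d r a x xs" and aq: "a \<subseteq> {1..n}" and r: "r > 0"
  shows "reach n d r ({}, 0) (card a + seq_len r a xs) (a, x)"
proof -
  let ?s = "card a"
  from sq obtain f where x0: "xs 0 = 0" and xe: "xs (?s + 1) = x" and xr: "\<forall>t \<le> ?s + 1. xs t < r"
    and bij: "bij_betw f {1..?s} a" and fD: "\<forall>t\<in>{1..?s}. f t \<in> Dset n d (xs t)"
    unfolding is_seq_def Let_def by blast
  have P: "t \<le> ?s \<Longrightarrow> reach n d r ({}, 0) (t + (\<Sum>\<tau>=1..t. cdist r (xs \<tau>) (xs (\<tau> - 1)))) (f ` {1..t}, xs t)" for t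
  proof (induction t)
    case 0
    have "({}, 0) \<in> QV n r" using r by (simp add: QV_def)
    then show ?case using x0 reach.r0 by fastforce
  next
    case (Suc t)
    let ?k = "t + (\<Sum>\<tau>=1..t. cdist r (xs \<tau>) (xs (\<tau> - 1)))"
    have R1: "reach n d r ({}, 0) (?k + cdist r (xs (Suc t)) (xs t)) (f ` {1..t}, xs (Suc t))"
    proof -
      have IH': "reach n d r ({}, 0) ?k (f ` {1..t}, xs t)" using Suc.IH Suc.prems by simp
      have xst: "xs (Suc t) < r" using xr Suc.prems by simp
      show ?thesis using ring_move[OF IH' r xst] .
    qed
    have ft: "f (Suc t) \<in> Dset n d (xs (Suc t))" using fD Suc.prems by simp
    then obtain j where j: "1 \<le> j" "j \<le> d" "f (Suc t) = idx n d j (xs (Suc t))" using Dset_E by blast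
    have inj: "inj_on f {1..?s}" using bij bij_betw_def by blast
    have nin: "f (Suc t) \<notin> f ` {1..t}"
    proof
      assume "f (Suc t) \<in> f ` {1..t}"
      then obtain u where u: "u \<in> {1..t}" "f u = f (Suc t)" by auto
      have "u \<in> {1..?s}" "Suc t \<in> {1..?s}" using u(1) Suc.prems by auto
      then have "u = Suc t" using inj_onD[OF inj u(2)] by blast
      then show False using u(1) by simp
    qed
    have img: "f ` {1..Suc t} = insert (f (Suc t)) (f ` {1..t})"
      by (simp add: atLeastAtMostSuc_conv)
    have "f ` {1..Suc t} \<subseteq> f ` {1..?s}" using Suc.prems by (intro image_mono) auto
    also have "\<dots> = a" using bij by (simp add: bij_betw_def)
    finally have sub: "f ` {1..Suc t} \<subseteq> {1..n}" using aq by blast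
    have sd: "f ` {1..Suc t} = sdiff1 (f ` {1..t}) (idx n d j (xs (Suc t)))"
      using img nin j(3) by (simp add: sdiff1_def)
    have q1: "(f ` {1..t}, xs (Suc t)) \<in> QV n r" using sub xr Suc.prems img by (auto simp: QV_def)
    have q2: "(f ` {1..Suc t}, xs (Suc t)) \<in> QV n r" using sub xr Suc.prems by (auto simp: QV_def)
    have "Qadj n d r (f ` {1..t}, xs (Suc t)) (f ` {1..Suc t}, xs (Suc t))"
      unfolding Qadj_def using q1 q2 sd j(1,2) by auto
    then have "reach n d r ({}, 0) (Suc (?k + cdist r (xs (Suc t)) (xs t))) (f ` {1..Suc t}, xs (Suc t))"
      using R1 reach.rS by blast
    then show ?case by (simp add: add.assoc)
  qed
  have "reach n d r ({}, 0) (?s + (\<Sum>\<tau>=1..?s. cdist r (xs \<tau>) (xs (\<tau> - 1)))) (f ` {1..?s}, xs ?s)"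
    using P by simp
  moreover have "f ` {1..?s} = a" using bij by (simp add: bij_betw_def)
  ultimately have "reach n d r ({}, 0) (?s + (\<Sum>\<tau>=1..?s. cdist r (xs \<tau>) (xs (\<tau> - 1))) + cdist r x (xs ?s)) (a, x)"
  proof -
    have "xs (?s + 1) < r" using xr by simp
    then have xr': "x < r" using xe by simp
    assume h: "reach n d r ({}, 0) (?s + (\<Sum>\<tau>=1..?s. cdist r (xs \<tau>) (xs (\<tau> - 1)))) (f ` {1..?s}, xs ?s)"
      "f ` {1..?s} = a"
    show ?thesis using ring_move[OF h(1) r xr'] h(2) by simp
  qed
  then show ?thesis using xe by (simp add: seq_len_split add.assoc)
qed

lemma cover:
  assumes "d \<ge> 1" "n \<le> d * r" "1 \<le> i" "i \<le> n"
  shows "i \<in> Dset n d ((i - 1) div d) \<and> (i - 1) div d < r"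
proof
  have "idx n d ((i - 1) mod d + 1) ((i - 1) div d) = ((i - 1 + n) mod n) + 1"
  proof -
    have e: "(i - 1) mod d + 1 + d * ((i - 1) div d) + n - 1 = i - 1 + n"
      using mult_div_mod_eq[of d "i - 1"] by linarith
    show ?thesis unfolding idx_def e ..
  qed
  also have "\<dots> = i"
  proof -
    have "(i - 1 + n) mod n = (i - 1) mod n" by simp
    also have "\<dots> = i - 1" using assms(3,4) by simp
    finally show ?thesis using assms(3) by simp
  qed
  finally have "idx n d ((i - 1) mod d + 1) ((i - 1) div d) = i" .
  moreover have "1 \<le> (i - 1) mod d + 1" "(i - 1) mod d + 1 \<le> d" using assms(1)
    by (auto simp: Suc_leI)
  ultimately show "i \<in> Dset n d ((i - 1) div d)" using Dset_I by metis
  show "(i - 1) div d < r" using assms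
    by (simp add: div_less_iff_less_mult mult.commute)
qed

lemma seq_exists:
  assumes "d \<ge> 1" "n \<le> d * r" "a \<subseteq> {1..n}" "x < r"
  shows "\<exists>xs. is_seq n d r a x xs"
proof -
  have fa: "finite a" using assms(3) finite_subset by blast
  obtain f where bij: "bij_betw f {1..card a} a" using ex_bij_betw_nat_finite_1[OF fa] by blast
  define xs where "xs t = (if t = 0 then 0 else if t \<le> card a then (f t - 1) div d else x)" for t
  have fin: "t \<in> {1..card a} \<Longrightarrow> f t \<in> {1..n}" for t using bij assms(3) bij_betw_apply by fastforce
  have "is_seq n d r a x xs"
    unfolding is_seq_def Let_def
  proof (intro conjI allI impI exI[of _ f])
    show "xs 0 = 0" by (simp add: xs_def)
    show "xs (card a + 1) = x" by (simp add: xs_def)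
    fix t assume "t \<le> card a + 1"
    show "xs t < r"
    proof (cases "t = 0")
      case True then show ?thesis using assms(4) by (simp add: xs_def)
    next
      case False
      show ?thesis
      proof (cases "t \<le> card a")
        case True
        then have "f t \<in> {1..n}" using fin False by simp
        then have "(f t - 1) div d < r" using cover[OF assms(1,2)] by simp
        then show ?thesis using True False by (simp add: xs_def)
      next
        case F2: False
        then show ?thesis using False assms(4) by (simp add: xs_def)
      qed
    qed
  next
    show "bij_betw f {1..card a} a" by (rule bij)
    show "\<forall>t\<in>{1..card a}. f t \<in> Dset n d (xs t)"
    proof
      fix t assume t: "t \<in> {1..card a}"
      then have "f t \<in> {1..n}" using fin by simp
      then have "f t \<in> Dset n d ((f t - 1) div d)" using cover[OF assms(1,2)] by simp
      moreover have "xs t = (f t - 1) div d" using t by (simp add: xs_def)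
      ultimately show "f t \<in> Dset n d (xs t)" by simp
    qed
  qed
  then show ?thesis by blast
qed




lemma step_ring:
  assumes sq: "is_seq n d r b y xs" and zr: "z < r" and r3: "r \<ge> 3"
    and zy: "z = (y + 1) mod r \<or> y = (z + 1) mod r"
  shows "\<exists>xs'. is_seq n d r b z xs' \<and> card b + seq_len r b xs' \<le> card b + seq_len r b xs + 1"
proof -
  let ?s = "card b"
  from sq obtain f where x0: "xs 0 = 0" and xe: "xs (?s + 1) = y" and xr: "\<forall>t \<le> ?s + 1. xs t < r"
    and bij: "bij_betw f {1..?s} b" and fD: "\<forall>t\<in>{1..?s}. f t \<in> Dset n d (xs t)"
    unfolding is_seq_def Let_def by blast
  define xs' where "xs' = xs(?s + 1 := z)"
  have "is_seq n d r b z xs'"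
    unfolding is_seq_def Let_def
  proof (intro conjI allI impI exI[of _ f])
    show "xs' 0 = 0" using x0 by (simp add: xs'_def)
    show "xs' (?s + 1) = z" by (simp add: xs'_def)
    fix t assume "t \<le> ?s + 1" then show "xs' t < r" using xr zr by (simp add: xs'_def)
  next
    show "bij_betw f {1..?s} b" by (rule bij)
    show "\<forall>t\<in>{1..?s}. f t \<in> Dset n d (xs' t)" using fD by (simp add: xs'_def)
  qed
  moreover have "seq_len r b xs' \<le> seq_len r b xs + 1"
  proof -
    have e: "(\<Sum>t=1..?s. cdist r (xs' t) (xs' (t-1))) = (\<Sum>t=1..?s. cdist r (xs t) (xs (t-1)))"
      by (rule sum.cong) (auto simp: xs'_def)
    have yr: "y < r" using xr xe by (metis le_refl)
    have sr: "xs ?s < r" using xr by simp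
    have "cdist r z (xs ?s) \<le> cdist r z y + cdist r y (xs ?s)" using cdist_tri zr yr sr by blast
    moreover have "cdist r z y \<le> 1" using cdist_ring1 yr r3 zy zr by blast
    ultimately have "cdist r z (xs ?s) \<le> cdist r y (xs ?s) + 1" by linarith
    then show ?thesis unfolding seq_len_split using e xe by (simp add: xs'_def)
  qed
  ultimately show ?thesis by auto
qed


lemma step_add:
  assumes sq: "is_seq n d r b y xs" and iD: "i \<in> Dset n d y" and ib: "i \<notin> b" and fb: "finite b"
  shows "\<exists>xs'. is_seq n d r (insert i b) y xs' \<and> seq_len r (insert i b) xs' = seq_len r b xs"
proof -
  let ?s = "card b"
  from sq obtain f where x0: "xs 0 = 0" and xe: "xs (?s + 1) = y" and xr: "\<forall>t \<le> ?s + 1. xs t < r"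
    and bij: "bij_betw f {1..?s} b" and fD: "\<forall>t\<in>{1..?s}. f t \<in> Dset n d (xs t)"
    unfolding is_seq_def Let_def by blast
  have ci: "card (insert i b) = Suc ?s" using ib fb by simp
  define xs' where "xs' = xs(?s + 2 := y)"
  define f' where "f' = f(?s + 1 := i)"
  have b1: "bij_betw f' {1..?s} b" using bij by (rule bij_betw_cong[THEN iffD1, rotated]) (simp add: f'_def)
  have b2: "bij_betw f' ({1..?s} \<union> {?s + 1}) (b \<union> {f' (?s + 1)})"
    by (rule notIn_Un_bij_betw) (use b1 ib in \<open>auto simp: f'_def\<close>)
  have b3: "bij_betw f' {1..Suc ?s} (insert i b)"
  proof -
    have "{1..Suc ?s} = {1..?s} \<union> {?s + 1}" by auto
    moreover have "insert i b = b \<union> {f' (?s + 1)}" by (auto simp: f'_def)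
    ultimately show ?thesis using b2 by simp
  qed
  have "is_seq n d r (insert i b) y xs'"
    unfolding is_seq_def Let_def ci
  proof (intro conjI allI impI exI[of _ f'])
    show "xs' 0 = 0" using x0 by (simp add: xs'_def)
    show "xs' (Suc ?s + 1) = y" by (simp add: xs'_def)
    fix t assume t: "t \<le> Suc ?s + 1"
    show "xs' t < r"
    proof (cases "t = ?s + 2")
      case True then show ?thesis using xr xe by (simp add: xs'_def) (metis le_refl)
    next
      case False then show ?thesis using xr t by (simp add: xs'_def)
    qed
  next
    show "bij_betw f' {1..Suc ?s} (insert i b)" by (rule b3)
    show "\<forall>t\<in>{1..Suc ?s}. f' t \<in> Dset n d (xs' t)"
    proof
      fix t assume t: "t \<in> {1..Suc ?s}"
      show "f' t \<in> Dset n d (xs' t)"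
      proof (cases "t = Suc ?s")
        case True then show ?thesis using iD xe by (simp add: f'_def xs'_def)
      next
        case False then show ?thesis using fD t by (simp add: f'_def xs'_def)
      qed
    qed
  qed
  moreover have "seq_len r (insert i b) xs' = seq_len r b xs"
  proof -
    have "seq_len r (insert i b) xs' = (\<Sum>t=1..Suc ?s. cdist r (xs' t) (xs' (t-1))) + cdist r (xs' (Suc ?s + 1)) (xs' (Suc ?s))"
      using seq_len_split[of r "insert i b" xs'] ci by simp
    also have "(\<Sum>t=1..Suc ?s. cdist r (xs' t) (xs' (t-1))) = (\<Sum>t=1..Suc ?s. cdist r (xs t) (xs (t-1)))"
      by (rule sum.cong) (auto simp: xs'_def)
    also have "cdist r (xs' (Suc ?s + 1)) (xs' (Suc ?s)) = 0" using xe by (simp add: xs'_def)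
    finally show ?thesis by (simp add: seq_len_def)
  qed
  ultimately show ?thesis by blast
qed

lemma step_remove:
  assumes sq: "is_seq n d r b y xs" and ib: "i \<in> b" and fb: "finite b"
  shows "\<exists>xs'. is_seq n d r (b - {i}) y xs' \<and> seq_len r (b - {i}) xs' \<le> seq_len r b xs"
proof -
  let ?s = "card b"
  from sq obtain f where x0: "xs 0 = 0" and xe: "xs (?s + 1) = y" and xr: "\<forall>t \<le> ?s + 1. xs t < r"
    and bij: "bij_betw f {1..?s} b" and fD: "\<forall>t\<in>{1..?s}. f t \<in> Dset n d (xs t)"
    unfolding is_seq_def Let_def by blast
  have sp: "?s \<ge> 1" using ib fb card_0_eq by fastforce
  then obtain s' where ss: "?s = Suc s'" by (cases ?s) auto
  have cr: "card (b - {i}) = s'" using ss ib fb by simp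
  define t0 where "t0 = inv_into {1..?s} f i"
  have ibim: "i \<in> f ` {1..?s}" using bij ib by (simp add: bij_betw_def)
  have t0in: "t0 \<in> {1..?s}" unfolding t0_def using ibim by (rule inv_into_into)
  have ft0: "f t0 = i" unfolding t0_def using ibim by (rule f_inv_into_f)
  define h where "h t = (if t < t0 then t else Suc t)" for t
  define xs' where "xs' t = xs (h t)" for t
  have bh: "bij_betw h {1..s'} ({1..?s} - {t0})"
    unfolding bij_betw_def
  proof
    show "inj_on h {1..s'}" unfolding inj_on_def h_def by auto
    show "h ` {1..s'} = {1..?s} - {t0}"
    proof
      show "h ` {1..s'} \<subseteq> {1..?s} - {t0}" using ss t0in by (auto simp: h_def)
      show "{1..?s} - {t0} \<subseteq> h ` {1..s'}"
      proof
        fix u assume u: "u \<in> {1..?s} - {t0}"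
        show "u \<in> h ` {1..s'}"
        proof (cases "u < t0")
          case True
          then have "h u = u" "u \<in> {1..s'}" using u t0in ss by (auto simp: h_def)
          then show ?thesis by (metis imageI)
        next
          case False
          then have "u > t0" using u by auto
          then have "h (u - 1) = u" "u - 1 \<in> {1..s'}" using u t0in ss by (auto simp: h_def)
          then show ?thesis by (metis imageI)
        qed
      qed
    qed
  qed
  have bf: "bij_betw f ({1..?s} - {t0}) (b - {i})"
    by (rule bij_betw_DiffI[OF bij]) (use ft0 t0in ib in auto)
  have bfh: "bij_betw (f \<circ> h) {1..s'} (b - {i})" using bij_betw_trans[OF bh bf] .
  have "is_seq n d r (b - {i}) y xs'"
    unfolding is_seq_def Let_def cr
  proof (intro conjI allI impI exI[of _ "f \<circ> h"])
    show "xs' 0 = 0" using x0 t0in by (simp add: xs'_def h_def)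
    show "xs' (s' + 1) = y" using xe t0in ss by (simp add: xs'_def h_def)
    fix t assume t: "t \<le> s' + 1"
    have "h t \<le> ?s + 1" using t ss by (simp add: h_def)
    then show "xs' t < r" using xr by (simp add: xs'_def)
  next
    show "bij_betw (f \<circ> h) {1..s'} (b - {i})" by (rule bfh)
    show "\<forall>t\<in>{1..s'}. (f \<circ> h) t \<in> Dset n d (xs' t)"
    proof
      fix t assume t: "t \<in> {1..s'}"
      then have "h t \<in> {1..?s}" using bh bij_betw_apply by fastforce
      then show "(f \<circ> h) t \<in> Dset n d (xs' t)" using fD by (simp add: xs'_def)
    qed
  qed
  moreover have "seq_len r (b - {i}) xs' \<le> seq_len r b xs"
  proof -
    obtain j where kj: "t0 + j = ?s" using t0in by (metis atLeastAtMost_iff le_add_diff_inverse)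
    have "(\<forall>t \<le> Suc (t0+j). xs t < r)" using xr kj by simp
    then have le: "(\<Sum>t=1..t0+j. cdist r (xs (if t < t0 then t else Suc t)) (xs (if t - 1 < t0 then t - 1 else Suc (t - 1))))
         \<le> (\<Sum>t=1..Suc (t0+j). cdist r (xs t) (xs (t-1)))"
      using sum_remove[of t0 j xs r] t0in by simp
    have "seq_len r (b - {i}) xs' = (\<Sum>t=1..t0+j. cdist r (xs' t) (xs' (t-1)))"
      unfolding seq_len_def cr using kj ss by simp
    also have "\<dots> = (\<Sum>t=1..t0+j. cdist r (xs (if t < t0 then t else Suc t)) (xs (if t - 1 < t0 then t - 1 else Suc (t - 1))))"
      by (simp only: xs'_def h_def)
    finally have "seq_len r (b - {i}) xs' = (\<Sum>t=1..t0+j. cdist r (xs (if t < t0 then t else Suc t)) (xs (if t - 1 < t0 then t - 1 else Suc (t - 1))))" .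
    moreover have "seq_len r b xs = (\<Sum>t=1..Suc (t0+j). cdist r (xs t) (xs (t-1)))"
      unfolding seq_len_def using kj by simp
    ultimately show ?thesis using le by simp
  qed
  ultimately show ?thesis by blast
qed


lemma lower:
  assumes "reach n d r u k v" "u = ({}, 0)" "r \<ge> 3"
  shows "\<exists>xs. is_seq n d r (fst v) (snd v) xs \<and> card (fst v) + seq_len r (fst v) xs \<le> k"
  using assms
proof (induction rule: reach.induct)
  case r0
  have "is_seq n d r {} 0 (\<lambda>_. 0)"
    unfolding is_seq_def Let_def using r0.prems(2) by (auto intro!: exI[of _ id])
  moreover have "seq_len r {} (\<lambda>_. 0) = 0" by (simp add: seq_len_def)
  ultimately show ?case using r0.prems(1) by auto
next
  case (rS k v w)
  obtain b y where v: "v = (b, y)" by (cases v)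
  obtain c z where w: "w = (c, z)" by (cases w)
  from rS.IH rS.prems obtain xs where sq: "is_seq n d r b y xs" and le: "card b + seq_len r b xs \<le> k"
    using v by auto
  have fb: "finite b" using reach_QV[OF rS.hyps(1)] v finite_subset by (auto simp: QV_def)
  have zr: "z < r" using rS.hyps(2) w by (simp add: Qadj_def QV_def)
  from rS.hyps(2) v w have cases: "(z = y \<and> (\<exists>i. 1 \<le> i \<and> i \<le> d \<and> c = sdiff1 b (idx n d i y)))
      \<or> (c = b \<and> (z = (y + 1) mod r \<or> y = (z + 1) mod r))"
    by (simp add: Qadj_def)
  then show ?case
  proof
    assume "c = b \<and> (z = (y + 1) mod r \<or> y = (z + 1) mod r)"
    then show ?thesis using step_ring[OF sq zr rS.prems(2)] le w by fastforce
  next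
    assume "z = y \<and> (\<exists>i. 1 \<le> i \<and> i \<le> d \<and> c = sdiff1 b (idx n d i y))"
    then obtain j where zy: "z = y" and j: "1 \<le> j" "j \<le> d" and c: "c = sdiff1 b (idx n d j y)" by blast
    let ?i = "idx n d j y"
    show ?thesis
    proof (cases "?i \<in> b")
      case True
      then have cc: "c = b - {?i}" using c by (simp add: sdiff1_def)
      obtain xs' where "is_seq n d r (b - {?i}) y xs'" "seq_len r (b - {?i}) xs' \<le> seq_len r b xs"
        using step_remove[OF sq True fb] by blast
      moreover have "card (b - {?i}) \<le> card b" using fb by (simp add: card_Diff1_le)
      ultimately show ?thesis using le w zy cc by (intro exI[of _ xs']) auto
    next
      case False
      then have cc: "c = insert ?i b" using c by (simp add: sdiff1_def)
      obtain xs' where "is_seq n d r (insert ?i b) y xs'" "seq_len r (insert ?i b) xs' = seq_len r b xs"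
        using step_add[OF sq Dset_I[OF j] False fb] by blast
      moreover have "card (insert ?i b) = Suc (card b)" using fb False by simp
      ultimately show ?thesis using le w zy cc by (intro exI[of _ xs']) auto
    qed
  qed
qed


theorem mainTheorem6:
  fixes n d r :: nat and a :: "nat set" and x :: nat
  assumes "n \<ge> 2" "d \<ge> 1" "r \<ge> 3" "n \<ge> d" "(d * r) mod n = 0"
    and "(a, x) \<in> QV n r"
  shows "Qdist n d r ({}, 0) (a, x) = card a + lmin n d r a x"
proof -
  have aq: "a \<subseteq> {1..n}" and xr: "x < r" using assms(6) by (auto simp: QV_def)
  have pos: "0 < d * r" using assms(2,3) by simp
  have ndr: "n \<le> d * r" using assms(5) pos by (simp add: dvd_imp_le mod_eq_0_iff_dvd)
  obtain xs0 where "is_seq n d r a x xs0" using seq_exists[OF assms(2) ndr aq xr] by blast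
  then have ex: "\<exists>k xs. is_seq n d r a x xs \<and> seq_len r a xs = k" by blast
  obtain xm where xm: "is_seq n d r a x xm" "seq_len r a xm = lmin n d r a x"
    using LeastI_ex[OF ex] unfolding lmin_def by blast
  have lmin_le: "is_seq n d r a x xs \<Longrightarrow> lmin n d r a x \<le> seq_len r a xs" for xs
    unfolding lmin_def by (rule Least_le) blast
  have up: "reach n d r ({}, 0) (card a + lmin n d r a x) (a, x)"
    using upper[OF xm(1) aq] assms(3) xm(2) by simp
  have lo: "card a + lmin n d r a x \<le> k" if hk: "reach n d r ({}, 0) k (a, x)" for k
  proof -
    obtain xs where "is_seq n d r a x xs" "card a + seq_len r a xs \<le> k"
      using lower[OF hk refl assms(3)] by auto
    then show ?thesis using lmin_le by fastforce
  qed
  show ?thesis unfolding Qdist_reach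
    by (rule Least_equality) (use up lo in auto)
qed


end
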